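(* If $M$ is a centrally endo-AIP right $R$-module, then $S=\mathrm{End}_R(M)$ is a semiprime ring.
   Context: For $N\le M$, $l_S(N)=\{\phi\in S:\phi(N)=0\}$. An ideal $I$ of $S$ is centrally s-unital if for every $a\in I$ there is $z\in I$ central in $S$ with $az=a$. $M$ is centrally endo-AIP if $l_S(N)$ is a centrally s-unital ideal of $S$ for every fully invariant submodule $N$ of $M$. *)

theory Defs
  imports "HOL-Algebra.Ideal"
begin

definition right_module :: "('m::ab_group_add \<Rightarrow> 'r::ring_1 \<Rightarrow> 'm) \<Rightarrow> bool" where
  "right_module act \<longleftrightarrow>
     (\<forall>x y r. act (x + y) r = act x r + act y r) \<and>
     (\<forall>x r s. act x (r + s) = act x r + act x s) \<and>
     (\<forall>x r s. act x (r * s) = act (act x r) s) \<and>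
     (\<forall>x. act x 1 = x)"

definition endos :: "('m::ab_group_add \<Rightarrow> 'r::ring_1 \<Rightarrow> 'm) \<Rightarrow> ('m \<Rightarrow> 'm) set" where
  "endos act = {f. (\<forall>x y. f (x + y) = f x + f y) \<and> (\<forall>x r. f (act x r) = act (f x) r)}"

definition End_ring :: "('m::ab_group_add \<Rightarrow> 'r::ring_1 \<Rightarrow> 'm) \<Rightarrow> ('m \<Rightarrow> 'm) ring" where
  "End_ring act = \<lparr>carrier = endos act, monoid.mult = (\<lambda>f g. f \<circ> g), one = id,
                   zero = (\<lambda>_. 0), add = (\<lambda>f g x. f x + g x)\<rparr>"

definition submodule :: "('m::ab_group_add \<Rightarrow> 'r::ring_1 \<Rightarrow> 'm) \<Rightarrow> 'm set \<Rightarrow> bool" where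
  "submodule act N \<longleftrightarrow> 0 \<in> N \<and> (\<forall>x\<in>N. \<forall>y\<in>N. x + y \<in> N) \<and> (\<forall>x\<in>N. - x \<in> N)
     \<and> (\<forall>x\<in>N. \<forall>r. act x r \<in> N)"

definition fully_invariant :: "('m::ab_group_add \<Rightarrow> 'r::ring_1 \<Rightarrow> 'm) \<Rightarrow> 'm set \<Rightarrow> bool" where
  "fully_invariant act N \<longleftrightarrow> submodule act N \<and> (\<forall>f\<in>endos act. f ` N \<subseteq> N)"

definition l_ann :: "('m::ab_group_add \<Rightarrow> 'r::ring_1 \<Rightarrow> 'm) \<Rightarrow> 'm set \<Rightarrow> ('m \<Rightarrow> 'm) set" where
  "l_ann act N = {f \<in> endos act. \<forall>x\<in>N. f x = 0}"

definition centrally_s_unital :: "('a, 'b) ring_scheme \<Rightarrow> 'a set \<Rightarrow> bool" where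
  "centrally_s_unital S I \<longleftrightarrow> ideal I S \<and>
     (\<forall>a\<in>I. \<exists>z\<in>I. (\<forall>s\<in>carrier S. z \<otimes>\<^bsub>S\<^esub> s = s \<otimes>\<^bsub>S\<^esub> z) \<and> a \<otimes>\<^bsub>S\<^esub> z = a)"

definition centrally_endo_AIP :: "('m::ab_group_add \<Rightarrow> 'r::ring_1 \<Rightarrow> 'm) \<Rightarrow> bool" where
  "centrally_endo_AIP act \<longleftrightarrow>
     (\<forall>N. fully_invariant act N \<longrightarrow> centrally_s_unital (End_ring act) (l_ann act N))"

definition semiprime :: "('a, 'b) ring_scheme \<Rightarrow> bool" where
  "semiprime S \<longleftrightarrow> ring S \<and>
     (\<forall>I. ideal I S \<and> (\<forall>a\<in>I. \<forall>b\<in>I. a \<otimes>\<^bsub>S\<^esub> b = \<zero>\<^bsub>S\<^esub>) \<longrightarrow> I = {\<zero>\<^bsub>S\<^esub>})"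

end

theory Submission
  imports Defs
begin

lemma endo_zero: "f \<in> endos act \<Longrightarrow> f 0 = 0"
  unfolding endos_def by (metis (mono_tags, lifting) add_cancel_right_right mem_Collect_eq)

lemma endo_minus: "f \<in> endos act \<Longrightarrow> f (- x) = - f x"
proof -
  assume a: "f \<in> endos act"
  have "f (- x) + f x = 0" using a endo_zero[OF a] unfolding endos_def
    by (metis (mono_tags, lifting) add.left_inverse mem_Collect_eq)
  thus ?thesis by (simp add: eq_neg_iff_add_eq_0)
qed

lemma act_zero: "right_module act \<Longrightarrow> act 0 r = 0"
  unfolding right_module_def by (metis add_cancel_right_right add_0)

lemma act_minus: "right_module act \<Longrightarrow> act (- x) r = - act x r"
proof -
  assume a: "right_module act"
  have "act (- x) r + act x r = 0" using a act_zero[OF a] unfolding right_module_def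
    by (metis add.left_inverse)
  thus ?thesis by (simp add: eq_neg_iff_add_eq_0)
qed

lemma End_ring_ring:
  assumes rm: "right_module act"
  shows "ring (End_ring act)"
proof (rule ringI)
  show "abelian_group (End_ring act)"
  proof (rule abelian_groupI)
    fix x assume x: "x \<in> carrier (End_ring act)"
    show "\<exists>y\<in>carrier (End_ring act). y \<oplus>\<^bsub>End_ring act\<^esub> x = \<zero>\<^bsub>End_ring act\<^esub>"
    proof (intro bexI)
      show "(\<lambda>m. - x m) \<in> carrier (End_ring act)"
        using x act_minus[OF rm] by (auto simp: End_ring_def endos_def)
    qed (auto simp: End_ring_def)
  qed (auto simp: End_ring_def endos_def act_zero[OF rm] algebra_simps rm[unfolded right_module_def])
  show "monoid (End_ring act)"
    by (rule monoidI) (auto simp: End_ring_def endos_def)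
qed (auto simp: End_ring_def endos_def)

theorem corollary3p2:
  fixes act :: "'m::ab_group_add \<Rightarrow> 'r::ring_1 \<Rightarrow> 'm"
  assumes "right_module act"
    and "centrally_endo_AIP act"
  shows "semiprime (End_ring act)"
  unfolding semiprime_def
proof (intro conjI allI impI)
  let ?S = "End_ring act"
  show R: "ring ?S" using End_ring_ring[OF assms(1)] .
  fix I assume H: "ideal I ?S \<and> (\<forall>a\<in>I. \<forall>b\<in>I. a \<otimes>\<^bsub>?S\<^esub> b = \<zero>\<^bsub>?S\<^esub>)"
  hence id: "ideal I ?S" and sq: "\<And>a b. a \<in> I \<Longrightarrow> b \<in> I \<Longrightarrow> a \<circ> b = (\<lambda>_. 0)"
    by (auto simp: End_ring_def)
  have Icar: "\<And>a. a \<in> I \<Longrightarrow> a \<in> endos act"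
    using ideal.Icarr[OF id] by (auto simp: End_ring_def)
  have rc: "\<And>a g. a \<in> I \<Longrightarrow> g \<in> endos act \<Longrightarrow> a \<circ> g \<in> I"
    using ideal.I_r_closed[OF id] by (auto simp: End_ring_def)
  define N where "N = {x. \<forall>f\<in>I. f x = 0}"
  have N0: "0 \<in> N" using Icar endo_zero unfolding N_def by blast
  have Nm: "- x \<in> N" if x: "x \<in> N" for x
    using x Icar endo_minus unfolding N_def by fastforce
  have Na: "act x r \<in> N" if x: "x \<in> N" for x r unfolding N_def
  proof (clarify)
    fix f assume f: "f \<in> I"
    have 1: "f (act x r) = act (f x) r" using Icar[OF f] unfolding endos_def by blast
    have "f x = 0" using x f unfolding N_def by blast
    hence "act (f x) r = 0" using act_zero[OF assms(1)] by simp
    then show "f (act x r) = 0" using 1 by simp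
  qed
  have Np: "x + y \<in> N" if x: "x \<in> N" and y: "y \<in> N" for x y unfolding N_def
  proof (clarify)
    fix f assume f: "f \<in> I"
    have 1: "f (x + y) = f x + f y" using Icar[OF f] unfolding endos_def by blast
    have "f x = 0" "f y = 0" using x y f unfolding N_def by blast+
    then show "f (x + y) = 0" using 1 by simp
  qed
  have Ng: "g ` N \<subseteq> N" if g: "g \<in> endos act" for g unfolding N_def
  proof (clarify)
    fix y f assume h: "\<forall>f\<in>I. f y = 0" "f \<in> I"
    have "f \<circ> g \<in> I" using rc[OF h(2) g] .
    then have "(f \<circ> g) y = 0" using h(1) by blast
    then show "f (g y) = 0" by simp
  qed
  have fi: "fully_invariant act N"
    unfolding fully_invariant_def submodule_def
  proof (intro conjI ballI allI)
    show "0 \<in> N" by (rule N0)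
  next
    fix x y assume "x \<in> N" "y \<in> N" then show "x + y \<in> N" by (rule Np)
  next
    fix x assume "x \<in> N" then show "- x \<in> N" by (rule Nm)
  next
    fix x r assume "x \<in> N" then show "act x r \<in> N" by (rule Na)
  next
    fix g assume "g \<in> endos act" then show "g ` N \<subseteq> N" by (rule Ng)
  qed
  have csu: "centrally_s_unital ?S (l_ann act N)"
  proof -
    have "\<forall>N. fully_invariant act N \<longrightarrow> centrally_s_unital (End_ring act) (l_ann act N)"
      using assms(2) unfolding centrally_endo_AIP_def .
    then have "fully_invariant act N \<longrightarrow> centrally_s_unital (End_ring act) (l_ann act N)"
      by (rule spec)
    then show ?thesis using fi by (rule mp)
  qed
  have zero: "a = (\<lambda>_. 0)" if a: "a \<in> I" for a
  proof -
    have "\<forall>x\<in>N. a x = 0" unfolding N_def using a by blast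
    then have "a \<in> l_ann act N" using Icar[OF a] unfolding l_ann_def by blast
    then have "\<exists>z\<in>l_ann act N. (\<forall>s\<in>carrier ?S. z \<otimes>\<^bsub>?S\<^esub> s = s \<otimes>\<^bsub>?S\<^esub> z) \<and> a \<otimes>\<^bsub>?S\<^esub> z = a"
    proof -
      have "\<forall>a\<in>l_ann act N. \<exists>z\<in>l_ann act N. (\<forall>s\<in>carrier ?S. z \<otimes>\<^bsub>?S\<^esub> s = s \<otimes>\<^bsub>?S\<^esub> z) \<and> a \<otimes>\<^bsub>?S\<^esub> z = a"
        using csu unfolding centrally_s_unital_def by (rule conjunct2)
      then show ?thesis using \<open>a \<in> l_ann act N\<close> by (rule bspec)
    qed
    then have "\<exists>z\<in>l_ann act N. (\<forall>s\<in>carrier ?S. z \<circ> s = s \<circ> z) \<and> a \<circ> z = a"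
      by (simp only: End_ring_def ring.simps monoid.simps partial_object.simps)
    then obtain z where z: "z \<in> l_ann act N" and zc: "\<forall>s\<in>carrier ?S. z \<circ> s = s \<circ> z"
      and az: "a \<circ> z = a" by blast
    have ac: "a \<in> carrier ?S" using Icar[OF a] by (simp add: End_ring_def)
    have c: "z \<circ> a = a \<circ> z" using zc ac by (rule bspec)
    have za: "a = z \<circ> a" using trans[OF az[symmetric] c[symmetric]] .
    have aN: "a x \<in> N" for x unfolding N_def
    proof (clarify)
      fix f assume f: "f \<in> I"
      have "f \<circ> a = (\<lambda>_. 0)" using sq[OF f a] .
      then show "f (a x) = 0" by (simp add: fun_eq_iff)
    qed
    have "a x = 0" for x
    proof -
      have "a x = (z \<circ> a) x" using za by (rule fun_cong)
      also have "\<dots> = z (a x)" by simp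
      also have "\<dots> = 0"
      proof -
        have "\<forall>y\<in>N. z y = 0" using z unfolding l_ann_def by blast
        then show ?thesis using aN[of x] by (rule bspec)
      qed
      finally show ?thesis .
    qed
    then show ?thesis by auto
  qed
  have "\<zero>\<^bsub>?S\<^esub> \<in> I" using id by (simp add: additive_subgroup.zero_closed ideal.axioms(1))
  moreover have "\<zero>\<^bsub>?S\<^esub> = (\<lambda>_. 0)" by (simp add: End_ring_def)
  ultimately show "I = {\<zero>\<^bsub>?S\<^esub>}"
  proof (intro equalityI subsetI)
    fix x assume "x \<in> I" then have "x = (\<lambda>_. 0)" by (rule zero)
    then show "x \<in> {\<zero>\<^bsub>?S\<^esub>}" using \<open>\<zero>\<^bsub>?S\<^esub> = (\<lambda>_. 0)\<close> by simp
  next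
    fix x assume "x \<in> {\<zero>\<^bsub>?S\<^esub>}" then show "x \<in> I" using \<open>\<zero>\<^bsub>?S\<^esub> \<in> I\<close> by simp
  qed
qed

end
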